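(* For every positive integer $n$, $N'(n,0,n-1)=n-1$.
   Context: $\mathbb{Z}_4$ is the ring of integers modulo $4$; a $\mathbb{Z}_4$-code of length $n$ is a $\mathbb{Z}_4$-submodule of $\mathbb{Z}_4^n$. Two codes are equivalent if one is obtained from the other by permuting coordinates and changing the signs of some coordinates. Every $\mathbb{Z}_4$-code is permutation-equivalent to one with generator matrix $\begin{pmatrix} I_{k_1} & A & B \\ O & 2I_{k_2} & 2D\end{pmatrix}$ with $A,D$ $(0,1)$-matrices and $B$ a $\mathbb{Z}_4$-matrix; the code then has type $4^{k_1}2^{k_2}$. The trivial extension of a code $C$ of length $n-1$ is $\{(c,0)\mid c\in C\}$ (the only code of length $0$ is the zero code). $N'(n,k_1,k_2)$ denotes the number of equivalence classes of $\mathbb{Z}_4$-codes of length $n$ and type $4^{k_1}2^{k_2}$ that are not equivalent to the trivial extension of any $\mathbb{Z}_4$-code of length $n-1$. *)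

theory Defs
  imports "HOL-Combinatorics.Permutations"
begin

text \<open>Words over Z4 of length n are lists of length n with entries in {0,1,2,3} (ints);
  arithmetic is taken mod 4.\<close>

definition is_word :: "nat \<Rightarrow> int list \<Rightarrow> bool" where
  "is_word n w \<longleftrightarrow> length w = n \<and> (\<forall>x\<in>set w. 0 \<le> x \<and> x < 4)"

definition word_add :: "int list \<Rightarrow> int list \<Rightarrow> int list" where
  "word_add v w = map2 (\<lambda>x y. (x + y) mod 4) v w"

definition word_smult :: "int \<Rightarrow> int list \<Rightarrow> int list" where
  "word_smult a w = map (\<lambda>x. (a * x) mod 4) w"

definition is_code :: "nat \<Rightarrow> int list set \<Rightarrow> bool" where
  "is_code n C \<longleftrightarrow> (\<forall>w\<in>C. is_word n w) \<and> replicate n 0 \<in> C \<and>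
     (\<forall>v\<in>C. \<forall>w\<in>C. word_add v w \<in> C) \<and> (\<forall>a. \<forall>w\<in>C. word_smult a w \<in> C)"

definition transform :: "nat \<Rightarrow> (nat \<Rightarrow> nat) \<Rightarrow> (nat \<Rightarrow> int) \<Rightarrow> int list \<Rightarrow> int list" where
  "transform n \<sigma> \<epsilon> w = map (\<lambda>i. (\<epsilon> i * w ! (\<sigma> i)) mod 4) [0..<n]"

definition code_equiv :: "nat \<Rightarrow> int list set \<Rightarrow> int list set \<Rightarrow> bool" where
  "code_equiv n C C' \<longleftrightarrow> (\<exists>\<sigma> \<epsilon>. \<sigma> permutes {..<n} \<and> (\<forall>i. \<epsilon> i \<in> {1, -1}) \<and>
      C' = transform n \<sigma> \<epsilon> ` C)"

definition span_code :: "nat \<Rightarrow> nat \<Rightarrow> (nat \<Rightarrow> int list) \<Rightarrow> int list set" where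
  "span_code n m r = {map (\<lambda>j. (\<Sum>i<m. c i * (r i ! j)) mod 4) [0..<n] | c. True}"

text \<open>Rows of the standard-form generator matrix
  [[I_k1, A, B], [O, 2 I_k2, 2 D]].\<close>
definition std_row :: "nat \<Rightarrow> nat \<Rightarrow> nat \<Rightarrow> (nat \<Rightarrow> nat \<Rightarrow> int) \<Rightarrow> (nat \<Rightarrow> nat \<Rightarrow> int)
    \<Rightarrow> (nat \<Rightarrow> nat \<Rightarrow> int) \<Rightarrow> nat \<Rightarrow> int list" where
  "std_row n k1 k2 A B D r = map (\<lambda>j.
     if r < k1 then
       (if j < k1 then (if j = r then 1 else 0)
        else if j < k1 + k2 then A r (j - k1) else B r (j - k1 - k2))
     else
       (if j < k1 then 0
        else if j < k1 + k2 then (if j = r then 2 else 0)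
        else 2 * D (r - k1) (j - k1 - k2))) [0..<n]"

text \<open>C has type 4^k1 2^k2: some coordinate permutation of C has a generator matrix in
  standard form with k1 rows of the first kind and k2 of the second.\<close>
definition has_type :: "nat \<Rightarrow> nat \<Rightarrow> nat \<Rightarrow> int list set \<Rightarrow> bool" where
  "has_type n k1 k2 C \<longleftrightarrow> k1 + k2 \<le> n \<and>
     (\<exists>\<sigma> A B D. \<sigma> permutes {..<n} \<and>
        (\<forall>i j. A i j \<in> {0, 1}) \<and> (\<forall>i j. D i j \<in> {0, 1}) \<and> (\<forall>i j. 0 \<le> B i j \<and> B i j < 4) \<and>
        transform n \<sigma> (\<lambda>_. 1) ` C = span_code n (k1 + k2) (std_row n k1 k2 A B D))"

definition trivial_ext :: "int list set \<Rightarrow> int list set" where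
  "trivial_ext C = {w @ [0] | w. w \<in> C}"

definition counted_codes :: "nat \<Rightarrow> nat \<Rightarrow> nat \<Rightarrow> int list set set" where
  "counted_codes n k1 k2 = {C. is_code n C \<and> has_type n k1 k2 C \<and>
      \<not> (\<exists>C'. is_code (n - 1) C' \<and> code_equiv n C (trivial_ext C'))}"

definition N' :: "nat \<Rightarrow> nat \<Rightarrow> nat \<Rightarrow> nat" where
  "N' n k1 k2 = card {{D \<in> counted_codes n k1 k2. code_equiv n C D} | C. C \<in> counted_codes n k1 k2}"

end

theory Submission imports Defs begin

definition EU :: "nat \<Rightarrow> nat set \<Rightarrow> int list set" where
  "EU n U = {v. length v = n \<and> (\<forall>j<n. v!j = 0 \<or> v!j = 2) \<and> (\<Sum>i\<in>U. v!i) mod 4 = 0}"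

lemma EU_word: "v \<in> EU n U \<Longrightarrow> is_word n v"
  unfolding EU_def is_word_def by (force simp: in_set_conv_nth)

lemma mod4_02: "(x::int) = 0 \<or> x = 2 \<Longrightarrow> e \<in> {1,-1} \<Longrightarrow> (e * x) mod 4 = x"
  by auto

lemma transform_nth: "i < n \<Longrightarrow> transform n \<sigma> \<epsilon> w ! i = (\<epsilon> i * w ! (\<sigma> i)) mod 4"
  unfolding transform_def by simp

lemma transform_len[simp]: "length (transform n \<sigma> \<epsilon> w) = n"
  unfolding transform_def by simp

lemma transform_EU_sub:
  assumes p: "\<sigma> permutes {..<n}" and e: "\<forall>i. \<epsilon> i \<in> {1,-1}" and U: "U \<subseteq> {..<n}"
    and v: "v \<in> EU n U"
  shows "transform n \<sigma> \<epsilon> v \<in> EU n (inv \<sigma> ` U)"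
proof -
  have vl: "length v = n" and v02: "\<forall>j<n. v!j = 0 \<or> v!j = 2" and vs: "(\<Sum>i\<in>U. v!i) mod 4 = 0"
    using v unfolding EU_def by auto
  have sl: "\<And>i. i < n \<Longrightarrow> \<sigma> i < n" using permutes_in_image[OF p] by auto
  have tn: "\<And>i. i < n \<Longrightarrow> transform n \<sigma> \<epsilon> v ! i = v ! (\<sigma> i)"
    using transform_nth mod4_02 v02 sl e by metis
  have iU: "inv \<sigma> ` U \<subseteq> {..<n}"
    using U permutes_in_image[OF permutes_inv[OF p]] by auto
  have "(\<Sum>i\<in>inv \<sigma> ` U. transform n \<sigma> \<epsilon> v ! i) = (\<Sum>i\<in>inv \<sigma> ` U. v ! (\<sigma> i))"
    using iU tn by (intro sum.cong) auto
  also have "\<dots> = (\<Sum>i\<in>U. v!i)"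
  proof -
    have "inj_on (inv \<sigma>) U" using permutes_inj[OF permutes_inv[OF p]] inj_on_subset by blast
    then have "(\<Sum>i\<in>inv \<sigma> ` U. v ! (\<sigma> i)) = (\<Sum>i\<in>U. v ! (\<sigma> (inv \<sigma> i)))"
      by (simp add: sum.reindex)
    also have "\<dots> = (\<Sum>i\<in>U. v!i)" using permutes_inverses(1)[OF p] by simp
    finally show ?thesis .
  qed
  finally show ?thesis using vs tn sl v02 unfolding EU_def by auto
qed

lemma transform_EU:
  assumes p: "\<sigma> permutes {..<n}" and e: "\<forall>i. \<epsilon> i \<in> {1,-1}" and U: "U \<subseteq> {..<n}"
  shows "transform n \<sigma> \<epsilon> ` EU n U = EU n (inv \<sigma> ` U)"
proof
  show "transform n \<sigma> \<epsilon> ` EU n U \<subseteq> EU n (inv \<sigma> ` U)"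
    using transform_EU_sub[OF assms] by auto
next
  show "EU n (inv \<sigma> ` U) \<subseteq> transform n \<sigma> \<epsilon> ` EU n U"
  proof
    fix u assume u: "u \<in> EU n (inv \<sigma> ` U)"
    have p': "inv \<sigma> permutes {..<n}" using permutes_inv[OF p] .
    have iU: "inv \<sigma> ` U \<subseteq> {..<n}"
      using U permutes_in_image[OF p'] by auto
    have e1: "\<forall>i. (\<lambda>_. 1::int) i \<in> {1,-1}" by simp
    let ?v = "transform n (inv \<sigma>) (\<lambda>_. 1) u"
    have "?v \<in> EU n (inv (inv \<sigma>) ` inv \<sigma> ` U)"
      by (rule transform_EU_sub[OF p' e1 iU u])
    moreover have "inv (inv \<sigma>) ` inv \<sigma> ` U = U"
      using permutes_inv_inv[OF p] permutes_inverses[OF p] by (simp add: image_image)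
    ultimately have vE: "?v \<in> EU n U" by simp
    have ul: "length u = n" and u02: "\<forall>j<n. u!j = 0 \<or> u!j = 2"
      using u unfolding EU_def by auto
    have sl: "\<And>i. i < n \<Longrightarrow> \<sigma> i < n" using permutes_in_image[OF p] by auto
    have "transform n \<sigma> \<epsilon> ?v = u"
    proof (rule nth_equalityI)
      show "length (transform n \<sigma> \<epsilon> ?v) = length u" using ul by simp
      fix i assume "i < length (transform n \<sigma> \<epsilon> ?v)"
      then have i: "i < n" by simp
      have "transform n \<sigma> \<epsilon> ?v ! i = (\<epsilon> i * (?v ! (\<sigma> i))) mod 4" using transform_nth i by simp
      also have "?v ! (\<sigma> i) = u ! i"
        using transform_nth[OF sl[OF i]] permutes_inverses(2)[OF p] u02 i by force
      finally show "transform n \<sigma> \<epsilon> ?v ! i = u ! i" using mod4_02 u02 e i by auto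
    qed
    then show "u \<in> transform n \<sigma> \<epsilon> ` EU n U" using vE by (metis image_eqI)
  qed
qed


definition ue :: "nat \<Rightarrow> nat \<Rightarrow> int list" where
  "ue n k = map (\<lambda>j. if j = k then 2 else 0) [0..<n]"

lemma ue_in_EU: assumes "k < n" "U \<subseteq> {..<n}" shows "ue n k \<in> EU n U \<longleftrightarrow> k \<notin> U"
proof -
  have "(\<Sum>i\<in>U. ue n k ! i) = (\<Sum>i\<in>U. if i = k then 2 else 0)"
    using assms by (intro sum.cong) (auto simp: ue_def)
  also have "\<dots> = (if k \<in> U then 2 else 0)"
    using assms by (simp add: sum.delta finite_subset[OF assms(2)])
  finally show ?thesis unfolding EU_def by (auto simp: ue_def)
qed

lemma EU_inj: assumes "U \<subseteq> {..<n}" "V \<subseteq> {..<n}" "EU n U = EU n V" shows "U = V"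
proof -
  have "\<And>k. k < n \<Longrightarrow> k \<in> U \<longleftrightarrow> k \<in> V"
    using ue_in_EU assms by metis
  then show ?thesis using assms(1,2) by blast
qed

lemma perm_exists:
  fixes n :: nat and U V :: "nat set"
  assumes U: "U \<subseteq> {..<n}" and V: "V \<subseteq> {..<n}" and c: "card U = card V"
  shows "\<exists>\<sigma>. \<sigma> permutes {..<n} \<and> \<sigma> ` V = U"
proof -
  have fU1: "finite U" using finite_subset[OF U] by simp
  have fU2: "finite V" using finite_subset[OF V] by simp
  note fU = fU1 fU2
  obtain f where f: "bij_betw f V U" using finite_same_card_bij[OF fU(2) fU(1)] c by metis
  have "card ({..<n} - V) = card ({..<n} - U)"
    using c U V fU by (simp add: card_Diff_subset)
  then obtain g where g: "bij_betw g ({..<n} - V) ({..<n} - U)"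
    using finite_same_card_bij by (metis finite_Diff finite_lessThan)
  define \<sigma> where "\<sigma> x = (if x \<in> V then f x else if x < n then g x else x)" for x
  have b1: "bij_betw \<sigma> V U" using f by (rule bij_betw_cong[THEN iffD1, rotated]) (simp add: \<sigma>_def)
  have b2: "bij_betw \<sigma> ({..<n} - V) ({..<n} - U)"
    using g by (rule bij_betw_cong[THEN iffD1, rotated]) (simp add: \<sigma>_def)
  have "bij_betw \<sigma> (V \<union> ({..<n} - V)) (U \<union> ({..<n} - U))"
    by (rule bij_betw_combine[OF b1 b2]) auto
  moreover have "V \<union> ({..<n} - V) = {..<n}" "U \<union> ({..<n} - U) = {..<n}" using U V by auto
  ultimately have "bij_betw \<sigma> {..<n} {..<n}" by simp
  moreover have "{x. \<sigma> x \<noteq> x} \<subseteq> {..<n}" using V by (auto simp: \<sigma>_def)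
  ultimately have "\<sigma> permutes {..<n}" by (simp add: permutes_altdef)
  moreover have "\<sigma> ` V = U" using b1 bij_betw_imp_surj_on by blast
  ultimately show ?thesis by blast
qed

lemma equiv_EU:
  assumes U: "U \<subseteq> {..<n}" and V: "V \<subseteq> {..<n}"
  shows "code_equiv n (EU n U) (EU n V) \<longleftrightarrow> card U = card V"
proof
  assume "code_equiv n (EU n U) (EU n V)"
  then obtain \<sigma> \<epsilon> where p: "\<sigma> permutes {..<n}" and e: "\<forall>i. \<epsilon> i \<in> {1,-1}"
    and eq: "EU n V = transform n \<sigma> \<epsilon> ` EU n U" unfolding code_equiv_def by blast
  have iU: "inv \<sigma> ` U \<subseteq> {..<n}"
    using U permutes_in_image[OF permutes_inv[OF p]] by auto
  have "EU n V = EU n (inv \<sigma> ` U)" using eq transform_EU[OF p e U] by simp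
  then have "V = inv \<sigma> ` U" using EU_inj[OF V iU] by simp
  moreover have "inj_on (inv \<sigma>) U" using permutes_inj[OF permutes_inv[OF p]] inj_on_subset by blast
  ultimately show "card U = card V" by (simp add: card_image)
next
  assume "card U = card V"
  then obtain \<sigma> where p: "\<sigma> permutes {..<n}" and s: "\<sigma> ` V = U" using perm_exists[OF U V] by metis
  have "inv \<sigma> ` U = V" using s permutes_inverses(2)[OF p] by (auto simp: image_image)
  then have "transform n \<sigma> (\<lambda>_. 1) ` EU n U = EU n V" using transform_EU[OF p _ U] by simp
  then show "code_equiv n (EU n U) (EU n V)" unfolding code_equiv_def using p by force
qed


lemma word_add_nth: "length v = n \<Longrightarrow> length w = n \<Longrightarrow> i < n \<Longrightarrow> word_add v w ! i = (v!i + w!i) mod 4"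
  unfolding word_add_def by simp

lemma is_code_EU: assumes U: "U \<subseteq> {..<n}" shows "is_code n (EU n U)"
  unfolding is_code_def
proof (intro conjI ballI allI)
  show "\<And>w. w \<in> EU n U \<Longrightarrow> is_word n w" by (rule EU_word)
  have "(\<Sum>i\<in>U. replicate n (0::int) ! i) = 0" using U by (intro sum.neutral) auto
  then show "replicate n 0 \<in> EU n U" unfolding EU_def by simp
next
  fix v w assume v: "v \<in> EU n U" and w: "w \<in> EU n U"
  have vl: "length v = n" and v02: "\<forall>j<n. v!j = 0 \<or> v!j = 2" and vs: "(\<Sum>i\<in>U. v!i) mod 4 = 0"
    using v unfolding EU_def by auto
  have wl: "length w = n" and w02: "\<forall>j<n. w!j = 0 \<or> w!j = 2" and ws: "(\<Sum>i\<in>U. w!i) mod 4 = 0"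
    using w unfolding EU_def by auto
  have "(\<Sum>i\<in>U. word_add v w ! i) = (\<Sum>i\<in>U. (v!i + w!i) mod 4)"
    using U vl wl by (intro sum.cong) (auto simp: word_add_nth)
  also have "\<dots> mod 4 = (\<Sum>i\<in>U. v!i + w!i) mod 4" by (rule mod_sum_eq)
  also have "\<dots> = ((\<Sum>i\<in>U. v!i) + (\<Sum>i\<in>U. w!i)) mod 4" by (simp add: sum.distrib)
  also have "\<dots> = 0" using vs ws by (simp add: mod_add_eq[symmetric])
  finally have s: "(\<Sum>i\<in>U. word_add v w ! i) mod 4 = 0" .
  have "\<forall>j<n. word_add v w ! j = 0 \<or> word_add v w ! j = 2"
  proof (intro allI impI)
    fix j assume j: "j < n"
    show "word_add v w ! j = 0 \<or> word_add v w ! j = 2"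
    proof -
      have "v!j = 0 \<or> v!j = 2" "w!j = 0 \<or> w!j = 2" using v02 w02 j by auto
      then show ?thesis by (auto simp: word_add_nth[OF vl wl j])
    qed
  qed
  then show "word_add v w \<in> EU n U" using s vl wl unfolding EU_def by (simp add: word_add_def)
next
  fix a :: int and w assume w: "w \<in> EU n U"
  have wl: "length w = n" and w02: "\<forall>j<n. w!j = 0 \<or> w!j = 2" and ws: "(\<Sum>i\<in>U. w!i) mod 4 = 0"
    using w unfolding EU_def by auto
  have "(\<Sum>i\<in>U. word_smult a w ! i) = (\<Sum>i\<in>U. (a * w!i) mod 4)"
    using U wl by (intro sum.cong) (auto simp: word_smult_def)
  also have "\<dots> mod 4 = (\<Sum>i\<in>U. a * w!i) mod 4" by (rule mod_sum_eq)
  also have "\<dots> = (a * (\<Sum>i\<in>U. w!i)) mod 4" by (simp add: sum_distrib_left)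
  also have "\<dots> = 0" using ws by (metis mod_mult_right_eq mult_zero_right mod_0)
  finally have s: "(\<Sum>i\<in>U. word_smult a w ! i) mod 4 = 0" .
  have "\<forall>j<n. word_smult a w ! j = 0 \<or> word_smult a w ! j = 2"
  proof (intro allI impI)
    fix j assume j: "j < n"
    have wj: "w!j = 0 \<or> w!j = 2" using w02 j by simp
    have "word_smult a w ! j = (a * w!j) mod 4" using j wl by (simp add: word_smult_def)
    moreover have "(a * 2) mod 4 = 0 \<or> (a * 2) mod 4 = 2"
    proof -
      have "(a*2) mod 4 = 2 * (a mod 2)" by (metis mult.commute mult_mod_right numeral_Bit0_eq_double)
      moreover have "a mod 2 = 0 \<or> a mod 2 = 1" by auto
      ultimately show ?thesis by auto
    qed
    ultimately show "word_smult a w ! j = 0 \<or> word_smult a w ! j = 2" using wj by auto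
  qed
  then show "word_smult a w \<in> EU n U" using s wl unfolding EU_def by (simp add: word_smult_def)
qed


lemma std_row_nth:
  assumes "j < n"
  shows "std_row n 0 (n-1) A B D i ! j = (if j < n - 1 then (if j = i then 2 else 0) else 2 * D i (j - (n-1)))"
  using assms unfolding std_row_def by simp

lemma sumD:
  fixes m :: nat
  assumes D: "\<forall>i j. D i j \<in> {0,1::int}"
  shows "(\<Sum>i<m. f i * (2 * D i 0)) = 2 * (\<Sum>i\<in>{i\<in>{..<m}. D i 0 = 1}. (f i :: int))"
proof -
  have "(\<Sum>i<m. f i * (2 * D i 0)) = (\<Sum>i<m. if D i 0 = 1 then 2 * f i else 0)"
  proof (intro sum.cong refl)
    fix i have "D i 0 = 0 \<or> D i 0 = 1" using D by auto
    then show "f i * (2 * D i 0) = (if D i 0 = 1 then 2 * f i else 0)" by auto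
  qed
  also have "\<dots> = (\<Sum>i\<in>{i\<in>{..<m}. D i 0 = 1}. 2 * f i)" by (rule sum.inter_filter[symmetric]) simp
  finally show ?thesis by (simp add: sum_distrib_left)
qed

lemma two_mod4: "((2::int) * x) mod 4 = 0 \<or> (2 * x) mod 4 = 2"
  by presburger

lemma span_EU:
  assumes n: "n \<ge> 1" and D: "\<forall>i j. D i j \<in> {0,1::int}"
  shows "span_code n (n-1) (std_row n 0 (n-1) A B D) = EU n ({i\<in>{..<n-1}. D i 0 = 1} \<union> {n-1})"
    (is "?S = EU n (?W \<union> {n-1})")
proof -
  have fW: "finite ?W" by simp
  have nW: "n - 1 \<notin> ?W" by simp
  define el where "el c = map (\<lambda>j. (\<Sum>i<n-1. c i * (std_row n 0 (n-1) A B D i ! j)) mod 4) [0..<n]" for c :: "nat \<Rightarrow> int"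
  have S: "?S = range el" unfolding span_code_def el_def by auto
  have el1: "el c ! j = (2 * c j) mod 4" if j: "j < n - 1" for c j
  proof -
    have "el c ! j = (\<Sum>i<n-1. c i * (if j = i then 2 else 0)) mod 4"
    proof -
      have jn: "j < n" using j by simp
      have r: "\<And>i. std_row n 0 (n-1) A B D i ! j = (if j = i then 2 else 0)"
        using std_row_nth[OF jn] j by simp
      show ?thesis unfolding el_def using j jn by (simp add: r r[simplified])
    qed
    also have "(\<Sum>i<n-1. c i * (if j = i then 2 else 0)) = (\<Sum>i<n-1. if i = j then 2 * c i else 0)"
      by (intro sum.cong) auto
    also have "\<dots> = 2 * c j" using j by (simp add: sum.delta)
    finally show ?thesis .
  qed
  have el2: "el c ! (n-1) = (2 * (\<Sum>i\<in>?W. c i)) mod 4" for c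
  proof -
    have "el c ! (n-1) = (\<Sum>i<n-1. c i * (2 * D i 0)) mod 4"
    proof -
      have jn: "n - 1 < n" using n by simp
      have r: "\<And>i. std_row n 0 (n-1) A B D i ! (n-1) = 2 * D i 0"
        using std_row_nth[OF jn] by simp
      show ?thesis unfolding el_def using jn by (simp add: r r[simplified])
    qed
    then show ?thesis using sumD[OF D] by simp
  qed
  have ell: "length (el c) = n" for c unfolding el_def by simp
  show ?thesis
  proof
    show "?S \<subseteq> EU n (?W \<union> {n-1})"
    proof
      fix v assume "v \<in> ?S"
      then obtain c where v: "v = el c" using S by auto
      have a: "\<forall>j<n. v!j = 0 \<or> v!j = 2"
      proof (intro allI impI)
        fix j assume j: "j < n"
        show "v!j = 0 \<or> v!j = 2"
        proof (cases "j < n - 1")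
          case True then show ?thesis using el1 v two_mod4 by simp
        next
          case False then have "j = n - 1" using j by simp
          then show ?thesis using el2 v two_mod4 by simp
        qed
      qed
      have "(\<Sum>i\<in>?W \<union> {n-1}. v!i) = (\<Sum>i\<in>?W. v!i) + v!(n-1)"
        using fW nW by (simp add: sum.union_disjoint)
      also have "(\<Sum>i\<in>?W. v!i) = (\<Sum>i\<in>?W. (2 * c i) mod 4)"
        using v el1 by (intro sum.cong) auto
      finally have "(\<Sum>i\<in>?W \<union> {n-1}. v!i) mod 4 = ((\<Sum>i\<in>?W. (2 * c i) mod 4) + (2 * (\<Sum>i\<in>?W. c i)) mod 4) mod 4"
        using v el2 by (simp add: add.commute)
      also have "\<dots> = ((\<Sum>i\<in>?W. 2 * c i) + 2 * (\<Sum>i\<in>?W. c i)) mod 4"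
      proof -
        have e: "(\<Sum>i\<in>?W. (2 * c i) mod 4) mod 4 = (\<Sum>i\<in>?W. 2 * c i) mod 4" by (rule mod_sum_eq)
        have "((\<Sum>i\<in>?W. (2 * c i) mod 4) + (2 * (\<Sum>i\<in>?W. c i)) mod 4) mod 4
            = ((\<Sum>i\<in>?W. (2 * c i) mod 4) mod 4 + (2 * (\<Sum>i\<in>?W. c i))) mod 4"
          by (simp only: mod_add_right_eq mod_add_left_eq)
        also have "\<dots> = ((\<Sum>i\<in>?W. 2 * c i) mod 4 + (2 * (\<Sum>i\<in>?W. c i))) mod 4" by (simp only: e)
        also have "\<dots> = ((\<Sum>i\<in>?W. 2 * c i) + 2 * (\<Sum>i\<in>?W. c i)) mod 4" by (simp only: mod_add_left_eq)
        finally show ?thesis .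
      qed
      also have "\<dots> = (4 * (\<Sum>i\<in>?W. c i)) mod 4" by (simp add: sum_distrib_left)
      also have "\<dots> = 0" by simp
      finally show "v \<in> EU n (?W \<union> {n-1})" using a v ell unfolding EU_def by simp
    qed
  next
    show "EU n (?W \<union> {n-1}) \<subseteq> ?S"
    proof
      fix v assume vE: "v \<in> EU n (?W \<union> {n-1})"
      have vl: "length v = n" and v02: "\<forall>j<n. v!j = 0 \<or> v!j = 2" and vs: "(\<Sum>i\<in>?W \<union> {n-1}. v!i) mod 4 = 0"
        using vE unfolding EU_def by auto
      define c where "c i = v!i div 2" for i
      have "el c = v"
      proof (rule nth_equalityI)
        show "length (el c) = length v" using ell vl by simp
        fix j assume "j < length (el c)"
        then have j: "j < n" using ell by simp
        show "el c ! j = v ! j"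
        proof (cases "j < n - 1")
          case True
          have "v!j = 0 \<or> v!j = 2" using v02 j by simp
          then show ?thesis by (cases "v!j = 0") (simp_all add: el1[OF True] c_def)
        next
          case False then have jn: "j = n - 1" using j by simp
          have Wl: "\<forall>i\<in>?W. i < n" by auto
          have "(\<Sum>i\<in>?W. c i) * 2 = (\<Sum>i\<in>?W. v!i)"
            unfolding sum_distrib_right c_def
          proof (intro sum.cong refl)
            fix i assume "i \<in> ?W"
            then have "v!i = 0 \<or> v!i = 2" using v02 Wl by auto
            then show "v ! i div 2 * 2 = v ! i" by auto
          qed
          define t where "t = (\<Sum>i\<in>?W. c i)"
          then have tc: "t = (\<Sum>i\<in>?W. c i)" by simp
          have t: "(\<Sum>i\<in>?W. v!i) = 2 * t" unfolding t_def using \<open>(\<Sum>i\<in>?W. c i) * 2 = (\<Sum>i\<in>?W. v!i)\<close> by simp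
          have "(\<Sum>i\<in>?W \<union> {n-1}. v!i) = (\<Sum>i\<in>?W. v!i) + v!(n-1)"
            using fW nW by (simp add: sum.union_disjoint)
          then have m: "(2 * t + v!(n-1)) mod 4 = 0" using vs t by (simp add: add.commute)
          have "v!(n-1) = 0 \<or> v!(n-1) = 2" using v02 n by simp
          then have "v!(n-1) = (2 * t) mod 4" using m by presburger
          then show ?thesis using el2 jn tc by simp
        qed
      qed
      then show "v \<in> ?S" using S by auto
    qed
  qed
qed


lemma transform_inv_word:
  assumes p: "\<sigma> permutes {..<n}" and w: "is_word n w"
  shows "transform n (inv \<sigma>) (\<lambda>_. 1) (transform n \<sigma> (\<lambda>_. 1) w) = w"
proof (rule nth_equalityI)
  have wl: "length w = n" and wr: "\<forall>x\<in>set w. 0 \<le> x \<and> x < 4" using w unfolding is_word_def by auto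
  show "length (transform n (inv \<sigma>) (\<lambda>_. 1) (transform n \<sigma> (\<lambda>_. 1) w)) = length w" using wl by simp
  fix i assume "i < length (transform n (inv \<sigma>) (\<lambda>_. 1) (transform n \<sigma> (\<lambda>_. 1) w))"
  then have i: "i < n" by simp
  have ii: "inv \<sigma> i < n" using permutes_in_image[OF permutes_inv[OF p]] i by simp
  have "w ! i \<in> set w" using i wl by simp
  then have "0 \<le> w!i \<and> w!i < 4" using wr by blast
  then show "transform n (inv \<sigma>) (\<lambda>_. 1) (transform n \<sigma> (\<lambda>_. 1) w) ! i = w ! i"
    using transform_nth[OF i] transform_nth[OF ii] permutes_inverses(1)[OF p] by simp
qed

lemma has_type_EU:
  assumes n: "n \<ge> 1" and C: "is_code n C" and h: "has_type n 0 (n-1) C"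
  shows "\<exists>U. U \<subseteq> {..<n} \<and> U \<noteq> {} \<and> C = EU n U"
proof -
  have "\<exists>\<sigma> A B D. \<sigma> permutes {..<n} \<and> (\<forall>i j. A i j \<in> {0, 1}) \<and> (\<forall>i j. D i j \<in> {0, 1::int}) \<and>
     (\<forall>i j. 0 \<le> B i j \<and> B i j < 4) \<and>
     transform n \<sigma> (\<lambda>_. 1) ` C = span_code n (0 + (n-1)) (std_row n 0 (n-1) A B D)"
    using h unfolding has_type_def by (rule conjunct2)
  then obtain \<sigma> A B D where p: "\<sigma> permutes {..<n}" and Ab: "\<forall>i j. A i j \<in> {0, 1::int}"
    and D: "\<forall>i j. D i j \<in> {0, 1::int}" and Bb: "\<forall>i j. 0 \<le> B i j \<and> B i j < 4"
    and eq: "transform n \<sigma> (\<lambda>_. 1) ` C = span_code n (0 + (n-1)) (std_row n 0 (n-1) A B D)"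
    apply (elim exE conjE) apply (rule that) prefer 5 apply assumption apply assumption+ done
  define U0 where "U0 = {i\<in>{..<n-1}. D i 0 = 1} \<union> {n-1}"
  have U0: "U0 \<subseteq> {..<n}" using n unfolding U0_def by auto
  have eq2: "transform n \<sigma> (\<lambda>_. 1) ` C = EU n U0" using eq span_EU[OF n D] unfolding U0_def by simp
  have p': "inv \<sigma> permutes {..<n}" using permutes_inv[OF p] .
  have "C = transform n (inv \<sigma>) (\<lambda>_. 1) ` transform n \<sigma> (\<lambda>_. 1) ` C"
  proof -
    have Cw: "\<forall>w\<in>C. is_word n w" using C unfolding is_code_def by simp
    have "\<forall>w\<in>C. transform n (inv \<sigma>) (\<lambda>_. 1) (transform n \<sigma> (\<lambda>_. 1) w) = w"
      using transform_inv_word[OF p] Cw by simp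
    then show ?thesis by (simp add: image_image)
  qed
  also have "\<dots> = EU n (inv (inv \<sigma>) ` U0)" unfolding eq2 by (rule transform_EU[OF p' _ U0]) simp
  also have "inv (inv \<sigma>) = \<sigma>" using permutes_inv_inv[OF p] .
  finally have "C = EU n (\<sigma> ` U0)" .
  moreover have "\<sigma> ` U0 \<subseteq> {..<n}" using U0 permutes_in_image[OF p] by auto
  moreover have "\<sigma> ` U0 \<noteq> {}" unfolding U0_def by simp
  ultimately show ?thesis by blast
qed

lemma triv_EU:
  assumes n: "n \<ge> 1"
  shows "trivial_ext (EU (n-1) {}) = EU n {n-1}"
proof
  show "trivial_ext (EU (n-1) {}) \<subseteq> EU n {n-1}"
  proof
    fix x assume "x \<in> trivial_ext (EU (n-1) {})"
    then obtain w where x: "x = w @ [0]" and w: "w \<in> EU (n-1) {}" unfolding trivial_ext_def by blast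
    have wl: "length w = n - 1" and w02: "\<forall>j<n-1. w!j = 0 \<or> w!j = 2" using w unfolding EU_def by auto
    have "\<forall>j<n. x!j = 0 \<or> x!j = 2"
    proof (intro allI impI)
      fix j assume j: "j < n"
      show "x!j = 0 \<or> x!j = 2"
      proof (cases "j < n - 1")
        case True then show ?thesis using w02 x wl by (simp add: nth_append)
      next
        case False then have "j = n - 1" using j by simp
        then show ?thesis using x wl by (simp add: nth_append)
      qed
    qed
    moreover have "x ! (n-1) = 0" using x wl by (simp add: nth_append)
    ultimately show "x \<in> EU n {n-1}" unfolding EU_def using x wl n by simp
  qed
next
  show "EU n {n-1} \<subseteq> trivial_ext (EU (n-1) {})"
  proof
    fix v assume v: "v \<in> EU n {n-1}"
    have vl: "length v = n" and v02: "\<forall>j<n. v!j = 0 \<or> v!j = 2" and vs: "v!(n-1) mod 4 = 0"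
      using v unfolding EU_def by auto
    have "v!(n-1) = 0 \<or> v!(n-1) = 2" using v02 n by simp
    then have v0: "v!(n-1) = 0" using vs by auto
    have ne: "v \<noteq> []" using vl n by auto
    have "v = butlast v @ [last v]" using ne by simp
    moreover have "last v = 0" using v0 ne vl by (simp add: last_conv_nth)
    moreover have "butlast v \<in> EU (n-1) {}"
      unfolding EU_def using vl v02 by (simp add: nth_butlast)
    ultimately show "v \<in> trivial_ext (EU (n-1) {})" unfolding trivial_ext_def by auto
  qed
qed

lemma triv1:
  assumes n: "n \<ge> 1" and U: "U \<subseteq> {..<n}" and c: "card U = 1"
  shows "\<exists>C'. is_code (n-1) C' \<and> code_equiv n (EU n U) (trivial_ext C')"
proof -
  have "is_code (n-1) (EU (n-1) {})" by (rule is_code_EU) simp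
  moreover have "code_equiv n (EU n U) (EU n {n-1})"
    using equiv_EU[OF U, of "{n-1}"] n c by simp
  ultimately show ?thesis using triv_EU[OF n] by metis
qed

lemma triv2:
  assumes U: "U \<subseteq> {..<n}" and c: "card U \<ge> 2"
  shows "\<not> (\<exists>C'. is_code (n-1) C' \<and> code_equiv n (EU n U) (trivial_ext C'))"
proof
  assume "\<exists>C'. is_code (n-1) C' \<and> code_equiv n (EU n U) (trivial_ext C')"
  then obtain C' \<sigma> \<epsilon> where C': "is_code (n-1) C'" and p: "\<sigma> permutes {..<n}" and e: "\<forall>i. \<epsilon> i \<in> {1,-1}"
    and eq: "trivial_ext C' = transform n \<sigma> \<epsilon> ` EU n U" unfolding code_equiv_def by blast
  define U' where "U' = inv \<sigma> ` U"
  have U': "U' \<subseteq> {..<n}" using U permutes_in_image[OF permutes_inv[OF p]] unfolding U'_def by auto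
  have "card U' = card U" unfolding U'_def
    using permutes_inj[OF permutes_inv[OF p]] inj_on_subset by (metis card_image subset_UNIV)
  then have cU': "card U' \<ge> 2" using c by simp
  have eq': "trivial_ext C' = EU n U'" using eq transform_EU[OF p e U] unfolding U'_def by simp
  have fU': "finite U'" using finite_subset[OF U'] by simp
  have n: "n \<ge> 2" using card_mono[OF _ U'] cU' by simp
  have "\<exists>x. x \<in> EU n U' \<and> x ! (n-1) = 2"
  proof (cases "n - 1 \<in> U'")
    case False
    then show ?thesis using ue_in_EU[OF _ U', of "n-1"] n by (auto simp: ue_def)
  next
    case True
    have "U' - {n-1} \<noteq> {}"
    proof
      assume "U' - {n-1} = {}"
      then have "U' \<subseteq> {n-1}" by blast
      then have "card U' \<le> 1" using card_mono[of "{n-1}" U'] by simp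
      then show False using cU' by simp
    qed
    then obtain j where j: "j \<in> U'" "j \<noteq> n - 1" by blast
    define x where "x = map (\<lambda>i. if i = n-1 \<or> i = j then 2 else (0::int)) [0..<n]"
    have "(\<Sum>i\<in>U'. x!i) = (\<Sum>i\<in>U'. if i = n-1 \<or> i = j then 2 else 0)"
      using U' by (intro sum.cong) (auto simp: x_def)
    also have "\<dots> = (\<Sum>i\<in>{i\<in>U'. i = n-1 \<or> i = j}. 2)" by (rule sum.inter_filter[OF fU', symmetric])
    also have "{i\<in>U'. i = n-1 \<or> i = j} = {n-1, j}" using True j by auto
    also have "(\<Sum>i\<in>{n-1, j}. (2::int)) = 4" using j by simp
    finally have "x \<in> EU n U'" unfolding EU_def x_def by auto
    moreover have "x ! (n-1) = 2" unfolding x_def using n by simp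
    ultimately show ?thesis by blast
  qed
  then obtain x where x: "x \<in> EU n U'" "x ! (n-1) = 2" by blast
  then have "x \<in> trivial_ext C'" using eq' by simp
  then obtain w where w: "x = w @ [0]" "w \<in> C'" unfolding trivial_ext_def by blast
  have "length w = n - 1" using C' w unfolding is_code_def is_word_def by blast
  then have "x ! (n-1) = 0" using w by (simp add: nth_append)
  then show False using x by simp
qed

lemma has_type_K:
  assumes m: "2 \<le> m" "m \<le> n"
  shows "has_type n 0 (n-1) (EU n {n-m..<n})"
proof -
  define D where "D i j = (if n - m \<le> i then 1 else (0::int))" for i j :: nat
  have D: "\<forall>i j. D i j \<in> {0,1}" unfolding D_def by simp
  have n: "n \<ge> 1" using m by simp
  have W: "{i\<in>{..<n-1}. D i 0 = 1} \<union> {n-1} = {n-m..<n}" unfolding D_def using m by auto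
  have sp: "span_code n (0 + (n-1)) (std_row n 0 (n-1) (\<lambda>_ _. 0) (\<lambda>_ _. 0) D) = EU n {n-m..<n}"
    using span_EU[OF n D] W by simp
  have sub: "{n-m..<n} \<subseteq> {..<n}" by auto
  have "transform n id (\<lambda>_. 1) ` EU n {n-m..<n} = EU n (inv id ` {n-m..<n})"
    by (rule transform_EU[OF permutes_id _ sub]) simp
  then have "transform n id (\<lambda>_. 1) ` EU n {n-m..<n} = EU n {n-m..<n}" by (simp add: inv_id)
  then show ?thesis unfolding has_type_def using sp D
    by (intro conjI exI[of _ id] exI[of _ "\<lambda>_ _. 0"] exI[of _ "\<lambda>_ _. 0"] exI[of _ D]) auto
qed


lemma counted_char:
  assumes n: "n \<ge> 1" and C: "C \<in> counted_codes n 0 (n-1)"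
  shows "\<exists>U. U \<subseteq> {..<n} \<and> 2 \<le> card U \<and> C = EU n U"
proof -
  have Cc: "is_code n C" and h: "has_type n 0 (n-1) C"
    and nt: "\<not> (\<exists>C'. is_code (n - 1) C' \<and> code_equiv n C (trivial_ext C'))"
    using C unfolding counted_codes_def by auto
  obtain U where U: "U \<subseteq> {..<n}" "U \<noteq> {}" "C = EU n U" using has_type_EU[OF n Cc h] by blast
  have fU: "finite U" using finite_subset[OF U(1)] by simp
  have "card U \<noteq> 0" using U(2) fU by simp
  moreover have "card U \<noteq> 1" using triv1[OF n U(1)] nt U(3) by metis
  ultimately have "2 \<le> card U" by linarith
  then show ?thesis using U by blast
qed

lemma K_counted:
  assumes m: "2 \<le> m" "m \<le> n"
  shows "EU n {n-m..<n} \<in> counted_codes n 0 (n-1)"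
proof -
  have sub: "{n-m..<n} \<subseteq> {..<n}" by auto
  have c: "card {n-m..<n} = m" using m by simp
  show ?thesis unfolding counted_codes_def
    using is_code_EU[OF sub] has_type_K[OF m] triv2[OF sub] c m by simp
qed

theorem mainTheorem7:
  fixes n :: nat
  assumes "n \<ge> 1"
  shows "N' n 0 (n - 1) = n - 1"
proof -
  have n: "n \<ge> 1" using assms .
  define CC where "CC = counted_codes n 0 (n-1)"
  define cls where "cls C = {D \<in> CC. code_equiv n C D}" for C
  define K where "K m = EU n {n-m..<n}" for m
  have Ksub: "{n-m..<n} \<subseteq> {..<n}" for m by auto
  have Kcard: "m \<le> n \<Longrightarrow> card {n-m..<n} = m" for m by simp
  have KCC: "m \<in> {2..n} \<Longrightarrow> K m \<in> CC" for m unfolding K_def CC_def using K_counted by auto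
  have eqset: "{cls C | C. C \<in> CC} = (\<lambda>m. cls (K m)) ` {2..n}"
  proof
    show "{cls C | C. C \<in> CC} \<subseteq> (\<lambda>m. cls (K m)) ` {2..n}"
    proof
      fix X assume "X \<in> {cls C | C. C \<in> CC}"
      then obtain C where X: "X = cls C" and C: "C \<in> CC" by blast
      obtain U where U: "U \<subseteq> {..<n}" "2 \<le> card U" "C = EU n U"
        using counted_char[OF n] C unfolding CC_def by blast
      define m where "m = card U"
      have mn: "m \<le> n" unfolding m_def using card_mono[OF _ U(1)] by simp
      have "cls C = cls (K m)"
        unfolding cls_def
      proof (intro Collect_cong conj_cong refl)
        fix D assume "D \<in> CC"
        then obtain V where V: "V \<subseteq> {..<n}" "D = EU n V"
          using counted_char[OF n] unfolding CC_def by blast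
        show "code_equiv n C D = code_equiv n (K m) D"
          unfolding K_def using equiv_EU[OF U(1) V(1)] equiv_EU[OF Ksub V(1)] U(3) V(2) Kcard[OF mn]
          unfolding m_def by simp
      qed
      moreover have "m \<in> {2..n}" using U(2) mn unfolding m_def by simp
      ultimately show "X \<in> (\<lambda>m. cls (K m)) ` {2..n}" using X by blast
    qed
  next
    show "(\<lambda>m. cls (K m)) ` {2..n} \<subseteq> {cls C | C. C \<in> CC}"
      using KCC by blast
  qed
  have inj: "inj_on (\<lambda>m. cls (K m)) {2..n}"
  proof
    fix m m' assume m: "m \<in> {2..n}" and m': "m' \<in> {2..n}" and e: "cls (K m) = cls (K m')"
    have "code_equiv n (K m) (K m)" unfolding K_def using equiv_EU[OF Ksub Ksub] by simp
    then have "K m \<in> cls (K m)" unfolding cls_def using KCC[OF m] by simp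
    then have "K m \<in> cls (K m')" using e by simp
    then have "code_equiv n (K m') (K m)" unfolding cls_def by simp
    then have "card {n-m'..<n} = card {n-m..<n}" unfolding K_def using equiv_EU[OF Ksub Ksub] by simp
    then show "m = m'" using m m' Kcard by simp
  qed
  have "N' n 0 (n-1) = card {cls C | C. C \<in> CC}"
    unfolding N'_def cls_def CC_def by simp
  also have "\<dots> = card {2..n}" using eqset inj by (simp add: card_image)
  also have "\<dots> = n - 1" by simp
  finally show ?thesis .
qed

end
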